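(* Let $L$ and $M$ be Euclidean lattices normalized so that $\mu_{\max}(L)=\mu_{\max}(M)=0$, and let $\alpha\in L\otimes M$. Then $|\alpha|\ge \sqrt{l(\alpha)}$.
   Context: A Euclidean lattice $L$ of rank $n$ is a discrete subgroup of rank $n$ spanning an $n$-dimensional real inner product space $L_{\mathbb{R}}$; $\deg(L)=-\log\mathrm{vol}(L_{\mathbb{R}}/L)$, $\mu(L)=\deg(L)/\operatorname{rk}(L)$. A sublattice is a subgroup with the induced inner product on its real span. $\mu_{\max}(M)=\max\{\mu(S): S\subseteq M \text{ a nonzero sublattice}\}$. The lattice $L\otimes M\subset L_{\mathbb{R}}\otimes M_{\mathbb{R}}$ has inner product $(v\otimes w,v'\otimes w')=(v,v')(w,w')$, and $|\alpha|$ denotes the norm. The length $l(\alpha)$ of $\alpha\in L\otimes M$ is the minimal integer $l\ge 0$ such that $\alpha=\sum_{k=1}^{l}u_k\otimes u_k'$ with $u_k\in L$, $u_k'\in M$. *)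

theory Defs
  imports "HOL-Analysis.Analysis"
begin

text \<open>Euclidean lattices are modelled inside a Euclidean space (every finite-dimensional
real inner product space is isometric to some such space). A Euclidean lattice is a
discrete additive subgroup; its real span with the induced inner product is L_R.\<close>

definition add_subgroup :: "'a::real_vector set \<Rightarrow> bool" where
  "add_subgroup L \<longleftrightarrow> 0 \<in> L \<and> (\<forall>x\<in>L. \<forall>y\<in>L. x - y \<in> L)"

definition discrete_set :: "'a::metric_space set \<Rightarrow> bool" where
  "discrete_set L \<longleftrightarrow> (\<forall>x\<in>L. \<exists>e>0. \<forall>y\<in>L. dist y x < e \<longrightarrow> y = x)"

definition euclidean_lattice :: "'a::euclidean_space set \<Rightarrow> bool" where
  "euclidean_lattice L \<longleftrightarrow> add_subgroup L \<and> discrete_set L"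

definition sublattice :: "'a::euclidean_space set \<Rightarrow> 'a set \<Rightarrow> bool" where
  "sublattice S L \<longleftrightarrow> S \<subseteq> L \<and> add_subgroup S"

definition rk :: "'a::euclidean_space set \<Rightarrow> nat" where
  "rk L = dim (span L)"

definition lattice_basis :: "'a::euclidean_space set \<Rightarrow> 'a list \<Rightarrow> bool" where
  "lattice_basis L bs \<longleftrightarrow> distinct bs \<and> independent (set bs) \<and>
     L = {(\<Sum>i<length bs. of_int (c i) *\<^sub>R bs ! i) | c. True}"

definition gram_det :: "'a::real_inner list \<Rightarrow> real" where
  "gram_det bs = (\<Sum>p | p permutes {..<length bs}.
      of_int (sign p) * (\<Prod>i<length bs. inner (bs ! i) (bs ! (p i))))"

text \<open>vol(L_R / L) = sqrt of the Gram determinant of any lattice basis.\<close>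
definition covol :: "'a::euclidean_space set \<Rightarrow> real" where
  "covol L = sqrt (gram_det (SOME bs. lattice_basis L bs))"

definition deg :: "'a::euclidean_space set \<Rightarrow> real" where
  "deg L = - ln (covol L)"

definition slope :: "'a::euclidean_space set \<Rightarrow> real" where
  "slope L = deg L / real (rk L)"

definition mu_max :: "'a::euclidean_space set \<Rightarrow> real" where
  "mu_max M = Sup {slope S | S. sublattice S M \<and> S \<noteq> {0}}"

text \<open>Tensor product: L_R \<otimes> M_R realized inside real^'m^'n (outer products) with the
Frobenius inner product, so (v\<otimes>w, v'\<otimes>w') = (v,v')(w,w').\<close>
definition tensor :: "real^'n::finite \<Rightarrow> real^'m::finite \<Rightarrow> real^'m^'n" where
  "tensor v w = (\<chi> i j. v $ i * w $ j)"

definition lattice_tensor :: "(real^'n::finite) set \<Rightarrow> (real^'m::finite) set \<Rightarrow> (real^'m^'n) set" where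
  "lattice_tensor L M = {(\<Sum>k<l. tensor (u k) (u' k)) | (l::nat) u u'. \<forall>k<l. u k \<in> L \<and> u' k \<in> M}"

definition tensor_length :: "(real^'n::finite) set \<Rightarrow> (real^'m::finite) set \<Rightarrow> real^'m^'n \<Rightarrow> nat" where
  "tensor_length L M \<alpha> = (LEAST l::nat. \<exists>u u'. (\<forall>k<l. u k \<in> L \<and> u' k \<in> M) \<and>
       \<alpha> = (\<Sum>k<l. tensor (u k) (u' k)))"

end

theory Submission
  imports Defs "Jordan_Normal_Form.Determinant"
begin


definition gmat :: "'a::real_inner list \<Rightarrow> real Matrix.mat" where
  "gmat bs = Matrix.mat (length bs) (length bs) (\<lambda>(i,j). inner (bs!i) (bs!j))"

lemma gram_det_gmat: "gram_det bs = Determinant.det (gmat bs)"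
  unfolding gram_det_def Determinant.det_def gmat_def by (simp add: atLeast0LessThan)

definition lt :: "real Matrix.mat \<Rightarrow> 'a::real_vector list \<Rightarrow> 'a list" where
  "lt T bs = map (\<lambda>i. \<Sum>j<length bs. T $$ (i,j) *\<^sub>R bs!j) [0..<dim_row T]"

lemma length_lt[simp]: "length (lt T bs) = dim_row T" by (simp add: lt_def)
lemma nth_lt: "i < dim_row T \<Longrightarrow> lt T bs ! i = (\<Sum>j<length bs. T $$ (i,j) *\<^sub>R bs!j)"
  by (simp add: lt_def)

lemma gmat_lt:
  assumes T: "T \<in> carrier_mat n n" and l: "length (bs::'a::real_inner list) = n"
  shows "gmat (lt T bs) = T * gmat bs * transpose_mat T"
proof (rule eq_matI)
  fix i j assume i: "i < dim_row (T * gmat bs * transpose_mat T)" and j: "j < dim_col (T * gmat bs * transpose_mat T)"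
  hence i: "i < n" and j: "j < n" using T by auto
  have "gmat (lt T bs) $$ (i,j) = inner (\<Sum>k<n. T $$ (i,k) *\<^sub>R bs!k) (\<Sum>l<n. T $$ (j,l) *\<^sub>R bs!l)"
    using i j T l by (simp add: gmat_def nth_lt)
  also have "\<dots> = (\<Sum>l<n. (\<Sum>k<n. T $$ (i,k) * inner (bs!k) (bs!l)) * T $$ (j,l))"
    unfolding inner_sum_left inner_sum_right sum_distrib_right
    by (simp add: mult_ac)
  also have "\<dots> = (T * gmat bs * transpose_mat T) $$ (i,j)"
    using i j T l by (simp add: gmat_def scalar_prod_def atLeast0LessThan)
  finally show "gmat (lt T bs) $$ (i,j) = (T * gmat bs * transpose_mat T) $$ (i,j)" .
qed (use T l in \<open>auto simp: gmat_def\<close>)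

lemma gram_det_lt:
  assumes T: "T \<in> carrier_mat n n" and l: "length (bs::'a::real_inner list) = n"
  shows "gram_det (lt T bs) = Determinant.det T ^ 2 * gram_det bs"
proof -
  have G: "gmat bs \<in> carrier_mat n n" using l by (simp add: gmat_def)
  show ?thesis unfolding gram_det_gmat gmat_lt[OF T l]
    using T G by (simp add: det_mult[of _ n] det_transpose power2_eq_square)
qed



lemma span_image_coeffs:
  fixes f :: "nat \<Rightarrow> 'a::real_vector"
  assumes "finite I" "x \<in> span (f ` I)"
  shows "\<exists>c. x = (\<Sum>i\<in>I. c i *\<^sub>R f i)"
  using assms
proof (induction I arbitrary: x rule: finite_induct)
  case empty then show ?case by simp
next
  case (insert i I)
  from insert.prems obtain k where k: "x - k *\<^sub>R f i \<in> span (f ` I)"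
    by (auto simp: span_breakdown_eq)
  from insert.IH[OF k] obtain c where c: "x - k *\<^sub>R f i = (\<Sum>j\<in>I. c j *\<^sub>R f j)" by blast
  define c' where "c' = c(i := k)"
  have "(\<Sum>j\<in>I. c' j *\<^sub>R f j) = (\<Sum>j\<in>I. c j *\<^sub>R f j)"
    using insert.hyps by (intro sum.cong) (auto simp: c'_def)
  hence "x = (\<Sum>j\<in>insert i I. c' j *\<^sub>R f j)"
    using insert.hyps c by (simp add: c'_def algebra_simps)
  thus ?case by blast
qed

definition perp :: "'a::euclidean_space set \<Rightarrow> 'a \<Rightarrow> 'a" where
  "perp S x = (SOME z. x - z \<in> span S \<and> (\<forall>w\<in>span S. Linear_Algebra.orthogonal z w))"

lemma perp_ex: "\<exists>z. (x::'a::euclidean_space) - z \<in> span S \<and> (\<forall>w\<in>span S. Linear_Algebra.orthogonal z w)"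
proof (rule orthogonal_subspace_decomp_exists[of S x])
  fix y z assume "y \<in> span S" "\<And>w. w \<in> span S \<Longrightarrow> Linear_Algebra.orthogonal z w" "x = y + z"
  thus "\<exists>z. x - z \<in> span S \<and> (\<forall>w\<in>span S. Linear_Algebra.orthogonal z w)"
    by (intro exI[of _ z]) auto
qed

lemma perp12: "x - perp S x \<in> span S \<and> (\<forall>w\<in>span S. Linear_Algebra.orthogonal (perp S x) w)"
  unfolding perp_def by (rule someI_ex[OF perp_ex])

lemma perp1: "x - perp S x \<in> span S" using perp12 by blast
lemma perp2: "w \<in> span S \<Longrightarrow> Linear_Algebra.orthogonal (perp S x) w" using perp12 by blast

definition gs :: "'a::euclidean_space list \<Rightarrow> nat \<Rightarrow> 'a" where
  "gs bs k = perp (set (take k bs)) (bs!k)"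

lemma gs1: "bs!k - gs bs k \<in> span (set (take k bs))" unfolding gs_def by (rule perp1)
lemma gs2: "w \<in> span (set (take k bs)) \<Longrightarrow> Linear_Algebra.orthogonal (gs bs k) w" unfolding gs_def by (rule perp2)

lemma take_Suc_set: "k < length bs \<Longrightarrow> set (take (Suc k) bs) = insert (bs!k) (set (take k bs))"
  by (simp add: take_Suc_conv_app_nth)

lemma gs3: assumes "k < length bs" shows "gs bs k \<in> span (set (take (Suc k) bs))"
proof -
  have sub: "set (take k bs) \<subseteq> set (take (Suc k) bs)" by (rule set_take_subset_set_take) simp
  have "bs!k \<in> span (set (take (Suc k) bs))" using assms by (simp add: take_Suc_set span_base)
  moreover have "bs!k - gs bs k \<in> span (set (take (Suc k) bs))" using span_mono[OF sub] gs1[of bs k] by blast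
  ultimately have "bs!k - (bs!k - gs bs k) \<in> span (set (take (Suc k) bs))" by (rule span_diff)
  thus ?thesis by simp
qed

lemma span_insert_cong:
  assumes "span A = span B" "x - y \<in> span A"
  shows "span (insert x A) = span (insert y B)"
proof -
  have key: "z - k *\<^sub>R x \<in> span A \<longleftrightarrow> z - k *\<^sub>R y \<in> span A" for z k
  proof -
    have e: "z - k *\<^sub>R y = (z - k *\<^sub>R x) + k *\<^sub>R (x - y)" by (simp add: algebra_simps)
    have "k *\<^sub>R (x - y) \<in> span A" using assms(2) by (rule span_scale)
    from span_add_eq2[OF this, of "z - k *\<^sub>R x"] show ?thesis unfolding e by simp
  qed
  have "z \<in> span (insert x A) \<longleftrightarrow> z \<in> span (insert y B)" for z
  proof -
  have "z \<in> span (insert x A) \<longleftrightarrow> (\<exists>k. z - k *\<^sub>R x \<in> span A)" by (rule span_breakdown_eq)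
  also have "\<dots> \<longleftrightarrow> (\<exists>k. z - k *\<^sub>R y \<in> span A)" using key by blast
  also have "\<dots> \<longleftrightarrow> (\<exists>k. z - k *\<^sub>R y \<in> span B)" using assms(1) by simp
  also have "\<dots> \<longleftrightarrow> z \<in> span (insert y B)" by (rule span_breakdown_eq[symmetric])
  finally show ?thesis .
  qed
  thus ?thesis by blast
qed

lemma gs4: "k \<le> length bs \<Longrightarrow> span (set (take k bs)) = span (gs bs ` {..<k})"
proof (induction k)
  case 0 then show ?case by simp
next
  case (Suc k)
  hence k: "k < length bs" by simp
  have "span (set (take (Suc k) bs)) = span (insert (bs!k) (set (take k bs)))" using k by (simp add: take_Suc_set)
  also have "\<dots> = span (insert (gs bs k) (gs bs ` {..<k}))"
  proof (rule span_insert_cong)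
    show "span (set (take k bs)) = span (gs bs ` {..<k})" using Suc.IH k by simp
    show "bs!k - gs bs k \<in> span (set (take k bs))" by (rule gs1)
  qed
  also have "insert (gs bs k) (gs bs ` {..<k}) = gs bs ` {..<Suc k}" by (auto simp: lessThan_Suc)
  finally show ?case .
qed

lemma gs5: assumes "i < k" "k < length bs" shows "inner (gs bs k) (gs bs i) = 0"
proof -
  have "gs bs i \<in> span (set (take (Suc i) bs))" using assms by (intro gs3) auto
  moreover have "set (take (Suc i) bs) \<subseteq> set (take k bs)"
    by (rule set_take_subset_set_take) (use assms in simp)
  ultimately have "gs bs i \<in> span (set (take k bs))" using span_mono by blast
  from gs2[OF this] show ?thesis by (simp add: Linear_Algebra.orthogonal_def)
qed

lemma gs6: "gs bs k = 0 \<longleftrightarrow> bs!k \<in> span (set (take k bs))"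
proof
  assume "gs bs k = 0" thus "bs!k \<in> span (set (take k bs))" using gs1[of bs k] by simp
next
  assume a: "bs!k \<in> span (set (take k bs))"
  have "bs!k - (bs!k - gs bs k) \<in> span (set (take k bs))" using a gs1 by (rule span_diff)
  hence "Linear_Algebra.orthogonal (gs bs k) (gs bs k)" using gs2 by simp
  thus "gs bs k = 0" by (simp add: Linear_Algebra.orthogonal_def)
qed

lemma gs7: "norm (gs bs k) \<le> norm (bs!k)"
proof -
  have o: "Linear_Algebra.orthogonal (bs!k - gs bs k) (gs bs k)"
    using gs2[OF gs1[of bs k]] by (simp add: orthogonal_commute)
  have "(norm (bs!k))\<^sup>2 = (norm (bs!k - gs bs k))\<^sup>2 + (norm (gs bs k))\<^sup>2"
    using norm_add_Pythagorean[OF o] by simp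
  hence "(norm (gs bs k))\<^sup>2 \<le> (norm (bs!k))\<^sup>2" by simp
  thus ?thesis by (rule power2_le_imp_le) simp
qed



lemma set_take_nth: "k \<le> length xs \<Longrightarrow> set (take k xs) = (nth xs) ` {..<k}"
proof -
  assume k: "k \<le> length xs"
  have "take k xs = map (nth xs) [0..<k]" using k by (intro nth_equalityI) auto
  thus ?thesis by (simp add: atLeast0LessThan)
qed

lemma set_take_map_upt: "k \<le> n \<Longrightarrow> set (take k (map f [0..<n])) = f ` {..<k}"
  by (simp add: take_map min_def atLeast0LessThan)

lemma gram_det_orth:
  fixes bs ds :: "'a::euclidean_space list"
  assumes len: "length ds = n" "length bs = n"
    and orth: "\<And>i j. i < n \<Longrightarrow> j < n \<Longrightarrow> i \<noteq> j \<Longrightarrow> inner (ds!i) (ds!j) = 0"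
    and tri: "\<And>k. k < n \<Longrightarrow> bs!k - ds!k \<in> span (set (take k ds))"
  shows "gram_det bs = (\<Prod>k<n. (norm (ds!k))\<^sup>2)"
proof -
  have "\<forall>k. \<exists>c. k < n \<longrightarrow> bs!k - ds!k = (\<Sum>i\<in>{..<k}. c i *\<^sub>R ds!i)"
  proof
    fix k show "\<exists>c. k < n \<longrightarrow> bs!k - ds!k = (\<Sum>i\<in>{..<k}. c i *\<^sub>R ds!i)"
    proof (cases "k < n")
      case True
      have "set (take k ds) = (nth ds) ` {..<k}" using True len by (simp add: set_take_nth)
      thus ?thesis using span_image_coeffs[of "{..<k}" "bs!k - ds!k" "nth ds"] tri[OF True] by auto
    qed auto
  qed
  then obtain c where c: "\<And>k. k < n \<Longrightarrow> bs!k - ds!k = (\<Sum>i\<in>{..<k}. c k i *\<^sub>R ds!i)"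
    by metis
  define T where "T = Matrix.mat n n (\<lambda>(k,i). if i = k then 1 else if i < k then c k i else 0)"
  have T: "T \<in> carrier_mat n n" by (simp add: T_def)
  have detT: "Determinant.det T = 1"
    by (subst det_lower_triangular[OF _ T]) (auto simp: T_def prod_list_diag_prod)
  have "lt T ds = bs"
  proof (rule nth_equalityI)
    show "length (lt T ds) = length bs" using len T by simp
    fix k assume "k < length (lt T ds)"
    hence k: "k < n" using T by simp
    have "lt T ds ! k = (\<Sum>j<n. T $$ (k,j) *\<^sub>R ds!j)" using k T len by (simp add: nth_lt)
    also have "\<dots> = (\<Sum>j<n. (if j = k then ds!j else 0) + (if j < k then c k j *\<^sub>R ds!j else 0))"
      using k by (intro sum.cong) (auto simp: T_def)
    also have "\<dots> = (\<Sum>j<n. (if j = k then ds!j else 0)) + (\<Sum>j<n. (if j < k then c k j *\<^sub>R ds!j else 0))"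
      by (rule sum.distrib)
    also have "(\<Sum>j<n. (if j = k then ds!j else 0)) = ds!k" using k by simp
    also have "(\<Sum>j<n. (if j < k then c k j *\<^sub>R ds!j else 0)) = (\<Sum>j\<in>{j\<in>{..<n}. j < k}. c k j *\<^sub>R ds!j)"
      by (subst sum.inter_filter) auto
    also have "{j\<in>{..<n}. j < k} = {..<k}" using k by auto
    also have "ds!k + (\<Sum>j\<in>{..<k}. c k j *\<^sub>R ds!j) = bs!k" using c[OF k] by (metis add.commute diff_add_cancel)
    finally show "lt T ds ! k = bs ! k" .
  qed
  hence "gram_det bs = gram_det ds" using gram_det_lt[OF T len(1)] detT by simp
  also have "\<dots> = (\<Prod>k<n. (norm (ds!k))\<^sup>2)"
  proof -
    have G: "gmat ds \<in> carrier_mat n n" using len by (simp add: gmat_def)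
    have "Determinant.det (gmat ds) = prod_list (diag_mat (gmat ds))"
      by (rule det_lower_triangular[OF _ G]) (use len orth in \<open>auto simp: gmat_def\<close>)
    also have "\<dots> = (\<Prod>k<n. (norm (ds!k))\<^sup>2)" using len
      by (simp add: prod_list_diag_prod gmat_def atLeast0LessThan power2_norm_eq_inner)
    finally show ?thesis by (simp add: gram_det_gmat)
  qed
  finally show ?thesis .
qed

lemma gram_det_gs: "gram_det (bs::'a::euclidean_space list) = (\<Prod>k<length bs. (norm (gs bs k))\<^sup>2)"
proof -
  let ?ds = "map (gs bs) [0..<length bs]"
  have "gram_det bs = (\<Prod>k<length bs. (norm (?ds!k))\<^sup>2)"
  proof (rule gram_det_orth[of _ "length bs"])
    fix i j assume "i < length bs" "j < length bs" "i \<noteq> j"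
    thus "inner (?ds!i) (?ds!j) = 0" using gs5[of i j bs] gs5[of j i bs]
      by (cases "i < j") (auto simp: inner_commute)
  next
    fix k assume k: "k < length bs"
    have "set (take k ?ds) = gs bs ` {..<k}" using k by (simp add: set_take_map_upt)
    thus "bs!k - ?ds!k \<in> span (set (take k ?ds))" using gs1[of bs k] gs4[of k bs] k by simp
  qed auto
  thus ?thesis by simp
qed

lemma gram_det_nonneg: "gram_det (bs::'a::euclidean_space list) \<ge> 0"
  by (simp add: gram_det_gs prod_nonneg)

lemma hadamard: "gram_det (bs::'a::euclidean_space list) \<le> (\<Prod>k<length bs. (norm (bs!k))\<^sup>2)"
  unfolding gram_det_gs by (intro prod_mono) (simp add: gs7 power_mono)

lemma indep_list: "distinct bs \<and> independent (set bs) \<longleftrightarrow> (\<forall>k<length bs. bs!k \<notin> span (set (take k bs)))"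
proof (induction bs rule: rev_induct)
  case Nil then show ?case by (simp add: independent_empty)
next
  case (snoc x bs)
  have r: "(\<forall>k<length (bs@[x]). (bs@[x])!k \<notin> span (set (take k (bs@[x])))) \<longleftrightarrow>
        (\<forall>k<length bs. bs!k \<notin> span (set (take k bs))) \<and> x \<notin> span (set bs)"
    by (auto simp: nth_append less_Suc_eq)
  show ?case unfolding r snoc.IH[symmetric]
    using span_base[of x "set bs"] by (auto simp: independent_insert)
qed

lemma gram_det_pos_iff: "gram_det (bs::'a::euclidean_space list) > 0 \<longleftrightarrow> distinct bs \<and> independent (set bs)"
proof -
  have "gram_det bs > 0 \<longleftrightarrow> gram_det bs \<noteq> 0" using gram_det_nonneg[of bs] by linarith
  also have "\<dots> \<longleftrightarrow> (\<forall>k<length bs. gs bs k \<noteq> 0)"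
    unfolding gram_det_gs by (simp add: prod_zero_iff Ball_def)
  finally show ?thesis unfolding indep_list gs6 by simp
qed



section \<open>Subgroups and integer spans\<close>

definition zspan :: "'a::real_vector list \<Rightarrow> 'a set" where
  "zspan bs = {(\<Sum>i<length bs. of_int (c i) *\<^sub>R bs ! i) | c. True}"

lemma lattice_basis_iff: "lattice_basis L bs \<longleftrightarrow> distinct bs \<and> independent (set bs) \<and> L = zspan bs"
  unfolding lattice_basis_def zspan_def by simp

lemma sg0: "add_subgroup S \<Longrightarrow> 0 \<in> S" by (simp add: add_subgroup_def)
lemma sg_diff: "add_subgroup S \<Longrightarrow> x \<in> S \<Longrightarrow> y \<in> S \<Longrightarrow> x - y \<in> S" by (simp add: add_subgroup_def)
lemma sg_neg: assumes "add_subgroup S" "x \<in> S" shows "- x \<in> S"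
proof -
  have "0 - x \<in> S" by (rule sg_diff[OF assms(1) sg0[OF assms(1)] assms(2)])
  thus ?thesis by simp
qed
lemma sg_add: assumes "add_subgroup S" "x \<in> S" "y \<in> S" shows "x + y \<in> S"
proof -
  have "x - (- y) \<in> S" by (rule sg_diff[OF assms(1,2) sg_neg[OF assms(1,3)]])
  thus ?thesis by simp
qed

lemma sg_nat: "add_subgroup S \<Longrightarrow> x \<in> S \<Longrightarrow> of_nat n *\<^sub>R x \<in> S"
  by (induction n) (auto simp: sg0 sg_add algebra_simps)

lemma sg_int: assumes "add_subgroup S" "x \<in> S" shows "of_int k *\<^sub>R x \<in> S"
proof (cases "k \<ge> 0")
  case True
  then obtain n where "k = int n" by (metis nonneg_eq_int)
  thus ?thesis using sg_nat[OF assms] by simp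
next
  case False
  then obtain n where "k = - int n" by (metis neg_eq_iff_add_eq_0 nonneg_eq_int linorder_not_le less_imp_le add.commute neg_0_le_iff_le)
  thus ?thesis using sg_neg[OF assms(1) sg_nat[OF assms, of n]] by simp
qed

lemma sg_sum: assumes "add_subgroup S" "finite I" "\<And>i. i \<in> I \<Longrightarrow> f i \<in> S" shows "sum f I \<in> S"
  using assms(2,3) by (induction I rule: finite_induct) (auto simp: sg0[OF assms(1)] sg_add[OF assms(1)])

lemma sg_zcomb: "add_subgroup S \<Longrightarrow> (\<And>i. i < length bs \<Longrightarrow> bs!i \<in> S) \<Longrightarrow>
    (\<Sum>i<length bs. of_int (c i) *\<^sub>R bs ! i) \<in> S"
  by (rule sg_sum) (auto intro: sg_int)

lemma zspan_subset: assumes "add_subgroup S" "set bs \<subseteq> S" shows "zspan bs \<subseteq> S"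
proof
  fix x assume "x \<in> zspan bs"
  then obtain c where x: "x = (\<Sum>i<length bs. of_int (c i) *\<^sub>R bs ! i)" unfolding zspan_def by blast
  have "\<And>i. i < length bs \<Longrightarrow> bs!i \<in> S" using assms(2) nth_mem by blast
  thus "x \<in> S" unfolding x by (rule sg_zcomb[OF assms(1)])
qed

lemma zspan_sg: "add_subgroup (zspan bs)"
  unfolding add_subgroup_def zspan_def
proof (intro conjI ballI)
  show "0 \<in> {\<Sum>i<length bs. real_of_int (c i) *\<^sub>R bs ! i |c. True}"
    by (intro CollectI exI[of _ "\<lambda>_. 0"]) simp
  fix x y assume "x \<in> {\<Sum>i<length bs. real_of_int (c i) *\<^sub>R bs ! i |c. True}" "y \<in> {\<Sum>i<length bs. real_of_int (c i) *\<^sub>R bs ! i |c. True}"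
  then obtain c d where "x = (\<Sum>i<length bs. real_of_int (c i) *\<^sub>R bs ! i)" "y = (\<Sum>i<length bs. real_of_int (d i) *\<^sub>R bs ! i)" by blast
  hence "x - y = (\<Sum>i<length bs. real_of_int (c i - d i) *\<^sub>R bs ! i)"
    by (simp add: sum_subtractf scaleR_diff_left)
  thus "x - y \<in> {\<Sum>i<length bs. real_of_int (c i) *\<^sub>R bs ! i |c. True}"
    by (intro CollectI exI[of _ "\<lambda>i. c i - d i"]) simp
qed

lemma in_zspan: "i < length bs \<Longrightarrow> bs!i \<in> zspan bs"
proof -
  assume i: "i < length bs"
  have "(\<Sum>j<length bs. of_int (if j = i then 1 else 0) *\<^sub>R bs ! j) = (\<Sum>j<length bs. if j = i then bs ! j else 0)"
    by (intro sum.cong) auto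
  also have "\<dots> = bs!i" using i by simp
  finally have "(\<Sum>j<length bs. of_int (if j = i then 1 else 0) *\<^sub>R bs ! j) = bs!i" .
  thus ?thesis unfolding zspan_def by (intro CollectI exI[of _ "\<lambda>j. if j = i then 1 else 0"]) simp
qed

lemma set_zspan: "set bs \<subseteq> zspan bs"
proof
  fix x assume "x \<in> set bs"
  then obtain i where "i < length bs" "x = bs!i" by (auto simp: in_set_conv_nth)
  thus "x \<in> zspan bs" using in_zspan by simp
qed

lemma zspan_span: "zspan bs \<subseteq> span (set bs)"
proof
  fix x assume "x \<in> zspan bs"
  then obtain c where x: "x = (\<Sum>i<length bs. of_int (c i) *\<^sub>R bs ! i)" unfolding zspan_def by blast
  show "x \<in> span (set bs)" unfolding x by (rule span_sum, rule span_scale, rule span_base) simp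
qed

lemma span_zspan: "span (zspan bs) = span (set bs)"
  using zspan_span set_zspan by (metis span_mono span_span subset_antisym)

lemma coeff_unique:
  fixes bs :: "'a::real_vector list"
  assumes d: "distinct bs" and ind: "independent (set bs)"
    and eq: "(\<Sum>i<length bs. a i *\<^sub>R bs!i) = (\<Sum>i<length bs. b i *\<^sub>R bs!i)"
    and i: "i < length bs"
  shows "a i = b i"
proof -
  let ?n = "length bs"
  define e where "e j = a j - b j" for j
  have z: "(\<Sum>j<?n. e j *\<^sub>R bs!j) = 0" using eq by (simp add: e_def scaleR_diff_left sum_subtractf)
  have inj: "inj_on (nth bs) {..<?n}" using d by (simp add: inj_on_def nth_eq_iff_index_eq)
  have setbs: "set bs = nth bs ` {..<?n}" using set_take_nth[of "length bs" bs] by simp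
  define u where "u v = e (the_inv_into {..<?n} (nth bs) v)" for v
  have uj: "u (bs!j) = e j" if "j < ?n" for j
    using that inj by (simp add: u_def the_inv_into_f_f)
  have "(\<Sum>v\<in>set bs. u v *\<^sub>R v) = (\<Sum>j<?n. u (bs!j) *\<^sub>R bs!j)"
    unfolding setbs by (rule sum.reindex[OF inj, unfolded comp_def])
  also have "\<dots> = (\<Sum>j<?n. e j *\<^sub>R bs!j)" by (intro sum.cong) (simp_all add: uj)
  finally have "(\<Sum>v\<in>set bs. u v *\<^sub>R v) = 0" using z by simp
  hence "\<forall>v\<in>set bs. u v = 0" using ind unfolding dependent_explicit by blast
  hence "u (bs!i) = 0" using i by simp
  thus ?thesis using uj[OF i] by (simp add: e_def)
qed

section \<open>Invariance of the Gram determinant\<close>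

lemma det_Ints:
  assumes "A \<in> carrier_mat n n" "\<And>i j. i < n \<Longrightarrow> j < n \<Longrightarrow> A $$ (i,j) \<in> \<int>"
  shows "Determinant.det (A :: real Matrix.mat) \<in> \<int>"
  using assms unfolding Determinant.det_def
  by (auto intro!: Ints_sum Ints_mult Ints_prod simp: permutes_def)

lemma length_basis:
  assumes "lattice_basis S bs" shows "length bs = dim (span S)"
proof -
  have "S = zspan bs" "distinct bs" "independent (set bs)" using assms by (auto simp: lattice_basis_iff)
  thus ?thesis using span_zspan[of bs] dim_eq_card_independent[of "set bs"] distinct_card[of bs] by simp
qed

lemma zspan_coords:
  assumes "x \<in> zspan bs" obtains c where "x = (\<Sum>j<length bs. of_int (c j) *\<^sub>R bs!j)"
  using assms unfolding zspan_def by blast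

lemma gram_det_basis_inv:
  fixes bs cs :: "'a::euclidean_space list"
  assumes B: "lattice_basis S bs" and C: "lattice_basis S cs"
  shows "gram_det cs = gram_det bs"
proof -
  define n where "n = length bs"
  have lc: "length cs = n" using length_basis[OF B] length_basis[OF C] by (simp add: n_def)
  have SB: "S = zspan bs" and dB: "distinct bs" and iB: "independent (set bs)" using B by (auto simp: lattice_basis_iff)
  have SC: "S = zspan cs" using C by (auto simp: lattice_basis_iff)
  have "\<forall>i. \<exists>c. i < n \<longrightarrow> cs!i = (\<Sum>j<n. of_int (c j) *\<^sub>R bs!j)"
  proof
    fix i show "\<exists>c. i < n \<longrightarrow> cs!i = (\<Sum>j<n. of_int (c j) *\<^sub>R bs!j)"
    proof (cases "i < n")
      case True
      hence "cs!i \<in> zspan bs" using SB SC in_zspan[of i cs] lc by auto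
      thus ?thesis using n_def by (auto elim: zspan_coords)
    qed auto
  qed
  then obtain U where U: "\<And>i. i < n \<Longrightarrow> cs!i = (\<Sum>j<n. of_int (U i j) *\<^sub>R bs!j)" by metis
  have "\<forall>i. \<exists>c. i < n \<longrightarrow> bs!i = (\<Sum>j<n. of_int (c j) *\<^sub>R cs!j)"
  proof
    fix i show "\<exists>c. i < n \<longrightarrow> bs!i = (\<Sum>j<n. of_int (c j) *\<^sub>R cs!j)"
    proof (cases "i < n")
      case True
      hence "bs!i \<in> zspan cs" using SB SC in_zspan[of i bs] n_def by auto
      thus ?thesis using lc by (auto elim: zspan_coords)
    qed auto
  qed
  then obtain W where W: "\<And>i. i < n \<Longrightarrow> bs!i = (\<Sum>j<n. of_int (W i j) *\<^sub>R cs!j)" by metis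
  define Um where "Um = Matrix.mat n n (\<lambda>(i,j). real_of_int (U i j))"
  define Wm where "Wm = Matrix.mat n n (\<lambda>(i,j). real_of_int (W i j))"
  have Umc: "Um \<in> carrier_mat n n" and Wmc: "Wm \<in> carrier_mat n n" by (auto simp: Um_def Wm_def)
  have WU: "Wm * Um = 1\<^sub>m n"
  proof (rule eq_matI)
    fix i k assume "i < dim_row (1\<^sub>m n)" "k < dim_col (1\<^sub>m n)"
    hence i: "i < n" and k: "k < n" by auto
    have "bs!i = (\<Sum>j<n. of_int (W i j) *\<^sub>R (\<Sum>l<n. of_int (U j l) *\<^sub>R bs!l))"
      using W[OF i] U by simp
    also have "\<dots> = (\<Sum>j<n. \<Sum>l<n. (of_int (W i j) * of_int (U j l)) *\<^sub>R bs!l)"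
      by (simp add: scaleR_sum_right)
    also have "\<dots> = (\<Sum>l<n. \<Sum>j<n. (of_int (W i j) * of_int (U j l)) *\<^sub>R bs!l)"
      by (rule sum.swap)
    also have "\<dots> = (\<Sum>l<n. (\<Sum>j<n. of_int (W i j) * of_int (U j l)) *\<^sub>R bs!l)"
      by (simp add: scaleR_sum_left)
    finally have e2: "bs!i = (\<Sum>l<length bs. (\<Sum>j<n. of_int (W i j) * of_int (U j l)) *\<^sub>R bs!l)"
      by (simp add: n_def)
    have "(\<Sum>l<length bs. (if l = i then 1 else 0) *\<^sub>R bs!l) = (\<Sum>l<length bs. if l = i then bs!l else 0)"
      by (intro sum.cong) auto
    also have "\<dots> = bs!i" using i n_def by simp
    finally have e1: "(\<Sum>l<length bs. (if l = i then 1 else 0) *\<^sub>R bs!l) = (\<Sum>l<length bs. (\<Sum>j<n. of_int (W i j) * of_int (U j l)) *\<^sub>R bs!l)"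
      using e2 by simp
    have "(if k = i then 1 else 0) = (\<Sum>j<n. real_of_int (W i j) * real_of_int (U j k))"
      by (rule coeff_unique[OF dB iB e1]) (use k n_def in simp)
    thus "(Wm * Um) $$ (i,k) = 1\<^sub>m n $$ (i,k)"
      using i k by (simp add: Wm_def Um_def scalar_prod_def atLeast0LessThan split: if_splits)
  qed (auto simp: Wm_def Um_def)
  have "Determinant.det Wm * Determinant.det Um = 1"
    using det_mult[OF Wmc Umc] WU by simp
  moreover have "Determinant.det Wm \<in> \<int>" "Determinant.det Um \<in> \<int>"
    by (rule det_Ints[OF Wmc], simp add: Wm_def) (rule det_Ints[OF Umc], simp add: Um_def)
  ultimately have dU: "Determinant.det Um ^ 2 = 1"
  proof -
    assume a: "Determinant.det Wm * Determinant.det Um = 1"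
    assume "Determinant.det Wm \<in> \<int>" "Determinant.det Um \<in> \<int>"
    then obtain a b where ab: "Determinant.det Wm = of_int a" "Determinant.det Um = of_int b" by (auto elim!: Ints_cases)
    hence "a * b = 1" using a by (metis of_int_eq_1_iff of_int_mult)
    hence "b = 1 \<or> b = -1" by (auto simp: zmult_eq_1_iff)
    thus ?thesis using ab by auto
  qed
  have "lt Um bs = cs"
  proof (rule nth_equalityI)
    show "length (lt Um bs) = length cs" using lc Umc by simp
    fix i assume "i < length (lt Um bs)"
    hence i: "i < n" using Umc by simp
    show "lt Um bs ! i = cs ! i" using i Umc U[OF i] by (simp add: nth_lt Um_def n_def)
  qed
  thus ?thesis using gram_det_lt[OF Umc n_def[symmetric]] dU by simp
qed



lemma lattice_minnorm:
  assumes "euclidean_lattice L" shows "\<exists>e>0. \<forall>x\<in>L. x \<noteq> 0 \<longrightarrow> e \<le> norm x"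
proof -
  have sg: "add_subgroup L" and d: "discrete_set L" using assms by (auto simp: euclidean_lattice_def)
  have "0 \<in> L" using sg by (rule sg0)
  then obtain e where e: "e > 0" "\<forall>y\<in>L. dist y 0 < e \<longrightarrow> y = 0" using d unfolding discrete_set_def by blast
  have "\<forall>x\<in>L. x \<noteq> 0 \<longrightarrow> e \<le> norm x"
  proof (intro ballI impI)
    fix x assume "x \<in> L" "x \<noteq> 0"
    hence "\<not> dist x 0 < e" using e(2) by blast
    thus "e \<le> norm x" by simp
  qed
  thus ?thesis using e(1) by blast
qed

lemma finite_ball:
  fixes S :: "'a::euclidean_space set"
  assumes sg: "add_subgroup S" and lam: "lam > 0" and mn: "\<forall>x\<in>S. x \<noteq> 0 \<longrightarrow> lam \<le> norm x"
  shows "finite (S \<inter> cball 0 R)"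
proof (rule ccontr)
  let ?T = "S \<inter> cball 0 R"
  assume inf: "infinite ?T"
  have "bounded ?T" by (meson bounded_Int bounded_cball)
  then obtain x where "x islimpt ?T" using bounded_infinite_imp_islimpt[OF order.refl _ inf] by blast
  then obtain y where y: "y \<in> ?T" "y \<noteq> x" "dist y x < lam / 2"
    using lam unfolding islimpt_approachable by (meson half_gt_zero)
  have "dist y x > 0" using y by simp
  then obtain z where z: "z \<in> ?T" "z \<noteq> x" "dist z x < dist y x"
    using \<open>x islimpt ?T\<close> unfolding islimpt_approachable by blast
  have "z \<noteq> y" using z by auto
  have "y - z \<in> S" using y z sg by (auto intro: sg_diff)
  moreover have "y - z \<noteq> 0" using \<open>z \<noteq> y\<close> by simp
  moreover have "norm (y - z) < lam"
  proof -
    have "norm (y - z) \<le> dist y x + dist z x" by (metis dist_commute dist_norm dist_triangle)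
    thus ?thesis using y z by linarith
  qed
  ultimately show False using mn by force
qed

lemma shortest_vector:
  fixes S :: "'a::euclidean_space set"
  assumes sg: "add_subgroup S" and lam: "lam > 0" and mn: "\<forall>x\<in>S. x \<noteq> 0 \<longrightarrow> lam \<le> norm x"
    and x0: "x0 \<in> S" "x0 \<noteq> 0"
  shows "\<exists>v\<in>S. v \<noteq> 0 \<and> (\<forall>x\<in>S. x \<noteq> 0 \<longrightarrow> norm v \<le> norm x)"
proof -
  define F where "F = (S \<inter> cball 0 (norm x0)) - {0}"
  have fin: "finite F" unfolding F_def using finite_ball[OF sg lam mn] by blast
  have x0F: "x0 \<in> F" using x0 by (simp add: F_def)
  have "Min (norm ` F) \<in> norm ` F" using fin x0F by (intro Min_in) auto
  then obtain v where v: "v \<in> F" "norm v = Min (norm ` F)" by auto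
  have vmin: "norm v \<le> norm x" if "x \<in> F" for x using v fin that by simp
  show ?thesis
  proof (intro bexI conjI ballI impI)
    show "v \<in> S" "v \<noteq> 0" using v by (auto simp: F_def)
    fix x assume x: "x \<in> S" "x \<noteq> 0"
    show "norm v \<le> norm x"
    proof (cases "norm x \<le> norm x0")
      case True thus ?thesis using x vmin by (simp add: F_def)
    next
      case False thus ?thesis using vmin[OF x0F] by simp
    qed
  qed
qed

fun hc :: "nat \<Rightarrow> real" where
  "hc 0 = 1"
| "hc (Suc r) = hc r * (3/4) ^ r"

lemma hc_pos: "hc r > 0" by (induction r) auto

lemma zspan_Nil: "zspan [] = {0}" by (simp add: zspan_def)

lemma gram_det_Nil: "gram_det ([]::'a::euclidean_space list) = 1" by (simp add: gram_det_gs)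



lemma basis_exists:
  fixes S :: "'a::euclidean_space set"
  shows "add_subgroup S \<Longrightarrow> lam > 0 \<Longrightarrow> (\<forall>x\<in>S. x \<noteq> 0 \<longrightarrow> lam \<le> norm x) \<Longrightarrow> dim (span S) = r \<Longrightarrow>
    \<exists>bs. lattice_basis S bs \<and> length bs = r \<and> gram_det bs \<ge> hc r * lam ^ (2 * r)"
proof (induction r arbitrary: S lam)
  case 0
  hence "S \<subseteq> {0}" by simp
  hence S0: "S = {0}" using sg0[OF "0.prems"(1)] by blast
  have "lattice_basis S []" unfolding lattice_basis_iff using S0 by (simp add: zspan_Nil independent_empty)
  moreover have "gram_det ([]::'a list) = 1" by (rule gram_det_Nil)
  ultimately show ?case by (intro exI[of _ "[]::'a list"]) simp
next
  case (Suc r)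
  note sg = Suc.prems(1) and lam = Suc.prems(2) and mn = Suc.prems(3) and dimS = Suc.prems(4)
  obtain x0 where x0: "x0 \<in> S" "x0 \<noteq> 0"
  proof -
    have "\<not> S \<subseteq> {0}" using dimS by (metis dim_span dim_eq_0 nat.distinct(1))
    thus ?thesis using that by blast
  qed
  obtain v where v: "v \<in> S" "v \<noteq> 0" and vmin: "\<And>x. x \<in> S \<Longrightarrow> x \<noteq> 0 \<Longrightarrow> norm v \<le> norm x"
    using shortest_vector[OF sg lam mn x0] by blast
  have vv: "inner v v > 0" using v by simp
  define p where "p x = x - (inner x v / inner v v) *\<^sub>R v" for x
  have pv: "inner (p x) v = 0" for x using vv by (simp add: p_def inner_diff_left)
  have pv': "inner v (p x) = 0" for x using pv[of x] by (simp add: inner_commute)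
  have pdiff: "p (x - y) = p x - p y" for x y by (simp add: p_def inner_diff_left diff_divide_distrib algebra_simps)
  have lin: "linear p"
    by (rule linearI) (simp_all add: p_def inner_add_left add_divide_distrib algebra_simps)
  have pvv: "p v = 0" using vv by (simp add: p_def)
  have pdec: "x = p x + (inner x v / inner v v) *\<^sub>R v" for x by (simp add: p_def)
  define S' where "S' = p ` S"
  have sg': "add_subgroup S'"
    unfolding add_subgroup_def S'_def
  proof (intro conjI ballI)
    show "0 \<in> p ` S" using sg0[OF sg] linear_0[OF lin] by (metis image_eqI)
    fix x y assume "x \<in> p ` S" "y \<in> p ` S"
    then obtain a b where "a \<in> S" "b \<in> S" "x = p a" "y = p b" by blast
    thus "x - y \<in> p ` S" using pdiff sg_diff[OF sg] by (metis image_eqI)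
  qed
  define lam' where "lam' = sqrt 3 / 2 * norm v"
  have lam'pos: "lam' > 0" using v by (simp add: lam'_def)
  have lam'sq: "lam' ^ 2 = 3/4 * (norm v)^2" by (simp add: lam'_def power_mult_distrib power_divide)
  have mn': "\<forall>y\<in>S'. y \<noteq> 0 \<longrightarrow> lam' \<le> norm y"
  proof (intro ballI impI)
    fix y assume "y \<in> S'" "y \<noteq> 0"
    then obtain s where s: "s \<in> S" "y = p s" by (auto simp: S'_def)
    define t where "t = inner s v / inner v v"
    define k where "k = round t"
    define s' where "s' = s - of_int k *\<^sub>R v"
    have s'S: "s' \<in> S" unfolding s'_def by (rule sg_diff[OF sg s(1) sg_int[OF sg v(1)]])
    have s'eq: "s' = y + (t - of_int k) *\<^sub>R v" using pdec[of s] s by (simp add: s'_def t_def algebra_simps)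
    have "p s' = p s - p (of_int k *\<^sub>R v)" unfolding s'_def by (rule pdiff)
    also have "p (of_int k *\<^sub>R v) = 0" by (simp add: linear_cmul[OF lin] pvv)
    finally have "p s' = y" using s by simp
    hence "s' \<noteq> 0" using \<open>y \<noteq> 0\<close> linear_0[OF lin] by auto
    hence nv: "norm v \<le> norm s'" using vmin s'S by blast
    have orth: "Linear_Algebra.orthogonal y ((t - of_int k) *\<^sub>R v)"
      using pv[of s] s by (simp add: Linear_Algebra.orthogonal_def)
    have eq1: "(norm s')^2 = (norm y)^2 + (norm ((t - of_int k) *\<^sub>R v))^2"
      unfolding s'eq by (rule norm_add_Pythagorean[OF orth])
    have eq2: "(norm ((t - of_int k) *\<^sub>R v))^2 = (t - of_int k)^2 * (norm v)^2"
      by (simp add: power_mult_distrib)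
    have q: "(t - of_int k)^2 \<le> 1/4"
    proof -
      have "\<bar>of_int k - t\<bar> \<le> 1/2" unfolding k_def by (rule of_int_round_abs_le)
      hence "\<bar>t - of_int k\<bar> \<le> 1/2" by (simp add: abs_minus_commute)
      hence "\<bar>t - of_int k\<bar>^2 \<le> (1/2)^2" by (intro power_mono) auto
      thus ?thesis unfolding power2_abs by (simp add: power_divide)
    qed
    have le: "(t - of_int k)^2 * (norm v)^2 \<le> 1/4 * (norm v)^2" using q by (intro mult_right_mono) auto
    have nv2: "(norm v)^2 \<le> (norm s')^2" using nv by (intro power_mono) auto
    have "(norm v)^2 \<le> (norm y)^2 + 1/4 * (norm v)^2"
      using eq1 eq2 le nv2 by linarith
    hence "lam'^2 \<le> (norm y)^2" using lam'sq by linarith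
    thus "lam' \<le> norm y" by (rule power2_le_imp_le) simp
  qed
  have S'orth: "Linear_Algebra.orthogonal v y" if "y \<in> span S'" for y
    using that by (rule orthogonal_to_span) (auto simp: S'_def Linear_Algebra.orthogonal_def pv')
  have vnot: "v \<notin> span S'" using S'orth[of v] v by (auto simp: Linear_Algebra.orthogonal_def)
  have spanS: "span S = span (insert v S')"
    unfolding span_eq
  proof (intro conjI subsetI)
    fix x assume "x \<in> S"
    have "p x \<in> span (insert v S')" using \<open>x \<in> S\<close> by (intro span_base) (auto simp: S'_def)
    moreover have "(inner x v / inner v v) *\<^sub>R v \<in> span (insert v S')" by (intro span_scale span_base) simp
    ultimately show "x \<in> span (insert v S')" using pdec[of x] by (metis span_add)
  next
    fix x assume "x \<in> insert v S'"
    then consider "x = v" | s where "s \<in> S" "x = p s" by (auto simp: S'_def)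
    thus "x \<in> span S"
    proof cases
      case 1 thus ?thesis using v by (simp add: span_base)
    next
      case 2 thus ?thesis unfolding p_def using v(1) by (simp add: span_diff span_scale span_base)
    qed
  qed
  have dimS': "dim (span S') = r"
  proof -
    have "dim (span S) = dim (insert v S')" unfolding spanS by simp
    also have "\<dots> = dim S' + 1" using vnot by (simp add: dim_insert)
    finally show ?thesis using dimS by simp
  qed
  obtain cs where cs: "lattice_basis S' cs" "length cs = r" "gram_det cs \<ge> hc r * lam' ^ (2 * r)"
    using Suc.IH[OF sg' lam'pos mn' dimS'] by blast
  have S'z: "S' = zspan cs" using cs(1) by (simp add: lattice_basis_iff)
  have csS': "cs!i \<in> S'" if "i < r" for i using in_zspan[of i cs] that cs(2) S'z by simp
  have "\<forall>i. \<exists>s. i < r \<longrightarrow> s \<in> S \<and> p s = cs!i" using csS' unfolding S'_def by (metis image_iff)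
  then obtain lf where lf: "\<And>i. i < r \<Longrightarrow> lf i \<in> S \<and> p (lf i) = cs!i" by metis
  define bs where "bs = v # map lf [0..<r]"
  have lbs: "length bs = Suc r" by (simp add: bs_def)
  have bs0: "bs!0 = v" by (simp add: bs_def)
  have bsS: "bs!(Suc i) = lf i" if "i < r" for i using that by (simp add: bs_def)
  define ds where "ds = v # map (gs cs) [0..<r]"
  have gs_orth: "inner v (gs cs j) = 0" if "j < r" for j
  proof -
    have "gs cs j \<in> span (set (take (Suc j) cs))" using that cs(2) by (intro gs3) simp
    moreover have "set (take (Suc j) cs) \<subseteq> S'" using set_zspan[of cs] S'z by (meson order.trans set_take_subset)
    ultimately have "gs cs j \<in> span S'" using span_mono by blast
    thus ?thesis using S'orth by (simp add: Linear_Algebra.orthogonal_def)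
  qed
  have gdet: "gram_det bs = (norm v)^2 * gram_det cs"
  proof -
    have "gram_det bs = (\<Prod>k<Suc r. (norm (ds!k))\<^sup>2)"
    proof (rule gram_det_orth)
      show "length ds = Suc r" "length bs = Suc r" by (simp_all add: ds_def lbs)
      fix i j assume ij: "i < Suc r" "j < Suc r" "i \<noteq> j"
      show "inner (ds!i) (ds!j) = 0"
      proof (cases i)
        case 0 then obtain j' where "j = Suc j'" using ij by (cases j) auto
        thus ?thesis using 0 ij gs_orth[of j'] by (simp add: ds_def)
      next
        case (Suc i') note i' = this
        show ?thesis
        proof (cases j)
          case 0 thus ?thesis using i' ij gs_orth[of i'] by (simp add: ds_def inner_commute)
        next
          case (Suc j')
          thus ?thesis using i' ij gs5[of i' j' cs] gs5[of j' i' cs] cs(2)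
            by (cases "i' < j'") (auto simp: ds_def inner_commute)
        qed
      qed
    next
      fix k assume k: "k < Suc r"
      show "bs!k - ds!k \<in> span (set (take k ds))"
      proof (cases k)
        case 0 thus ?thesis by (simp add: bs_def ds_def span_zero)
      next
        case (Suc j)
        hence j: "j < r" using k by simp
        have tk: "set (take k ds) = insert v (gs cs ` {..<j})"
          using Suc j by (simp add: ds_def set_take_map_upt)
        have e: "bs!k - ds!k = (lf j - p (lf j)) + (cs!j - gs cs j)"
          using Suc j lf[OF j] by (simp add: bs_def ds_def)
        have "lf j - p (lf j) \<in> span (set (take k ds))"
          unfolding tk p_def by (simp add: span_base span_scale)
        moreover have "cs!j - gs cs j \<in> span (set (take k ds))"
        proof -
          have "cs!j - gs cs j \<in> span (gs cs ` {..<j})" using gs1[of cs j] gs4[of j cs] j cs(2) by simp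
          thus ?thesis unfolding tk using span_mono[of "gs cs ` {..<j}" "insert v (gs cs ` {..<j})"] by blast
        qed
        ultimately show ?thesis unfolding e by (rule span_add)
      qed
    qed
    also have "\<dots> = (norm v)^2 * (\<Prod>k<r. (norm (gs cs k))\<^sup>2)"
      unfolding prod.lessThan_Suc_shift by (simp add: ds_def)
    also have "(\<Prod>k<r. (norm (gs cs k))\<^sup>2) = gram_det cs" using gram_det_gs[of cs] cs(2) by simp
    finally show ?thesis .
  qed
  have bound: "gram_det bs \<ge> hc (Suc r) * lam ^ (2 * Suc r)"
  proof -
    have lv: "lam \<le> norm v" using mn v by blast
    have "lam' ^ (2 * r) = (3/4)^r * ((norm v)^2)^r"
      by (simp only: power_mult lam'sq power_mult_distrib)
    hence "gram_det bs \<ge> (norm v)^2 * (hc r * ((3/4)^r * ((norm v)^2)^r))"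
      using gdet cs(3) by (simp add: mult_left_mono)
    also have "(norm v)^2 * (hc r * ((3/4)^r * ((norm v)^2)^r)) = hc (Suc r) * norm v ^ (2 * Suc r)"
    proof -
      have "norm v ^ (2 * Suc r) = norm v ^ (2 + 2 * r)" by simp
      also have "\<dots> = norm v ^ 2 * norm v ^ (2 * r)" by (rule power_add)
      also have "norm v ^ (2 * r) = (norm v ^ 2) ^ r" by (rule power_mult)
      finally have e: "norm v ^ (2 * Suc r) = (norm v)^2 * ((norm v)^2)^r" .
      show ?thesis by (simp only: e hc.simps) (simp add: ac_simps)
    qed
    also have "hc (Suc r) * norm v ^ (2 * Suc r) \<ge> hc (Suc r) * lam ^ (2 * Suc r)"
      using lv lam hc_pos[of "Suc r"] by (intro mult_left_mono power_mono) auto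
    finally show ?thesis .
  qed
  have "hc (Suc r) * lam ^ (2 * Suc r) > 0" using hc_pos[of "Suc r"] lam by simp
  hence gpos: "gram_det bs > 0" using bound by linarith
  hence dind: "distinct bs" "independent (set bs)" using gram_det_pos_iff by auto
  have setS: "set bs \<subseteq> S" using v lf by (auto simp: bs_def)
  have "S = zspan bs"
  proof
    show "zspan bs \<subseteq> S" by (rule zspan_subset[OF sg setS])
  next
    show "S \<subseteq> zspan bs"
    proof
      fix s assume s: "s \<in> S"
      have "p s \<in> zspan cs" using s S'z by (auto simp: S'_def)
      then obtain c where c: "p s = (\<Sum>i<r. of_int (c i) *\<^sub>R cs!i)" using cs(2) by (auto elim: zspan_coords)
      define w where "w = s - (\<Sum>i<r. of_int (c i) *\<^sub>R lf i)"
      have wS: "w \<in> S" unfolding w_def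
        by (intro sg_diff[OF sg s] sg_sum[OF sg]) (auto intro: sg_int[OF sg] simp: lf)
      have "p w = p s - (\<Sum>i<r. of_int (c i) *\<^sub>R p (lf i))"
        unfolding w_def pdiff linear_sum[OF lin] linear_cmul[OF lin] by simp
      also have "(\<Sum>i<r. of_int (c i) *\<^sub>R p (lf i)) = (\<Sum>i<r. of_int (c i) *\<^sub>R cs!i)"
        by (intro sum.cong) (simp_all add: lf)
      finally have pw: "p w = 0" using c by simp
      define t where "t = inner w v / inner v v"
      have wt: "w = t *\<^sub>R v" using pdec[of w] pw by (simp add: t_def)
      have tint: "t = of_int \<lfloor>t\<rfloor>"
      proof (rule ccontr)
        assume ne: "t \<noteq> of_int \<lfloor>t\<rfloor>"
        define f where "f = t - of_int \<lfloor>t\<rfloor>"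
        have a: "of_int \<lfloor>t\<rfloor> \<le> t" "t < of_int \<lfloor>t\<rfloor> + 1" using floor_correct[of t] by auto
        have a1: "of_int \<lfloor>t\<rfloor> < t" by (rule order_le_neq_trans[OF a(1)]) (use ne in auto)
        have f: "f > 0" "f < 1" unfolding f_def using a1 a(2) by linarith+
        have "f *\<^sub>R v = w - of_int \<lfloor>t\<rfloor> *\<^sub>R v" by (simp add: wt f_def scaleR_diff_left)
        hence fS: "f *\<^sub>R v \<in> S" using sg_diff[OF sg wS sg_int[OF sg v(1)]] by simp
        have "f *\<^sub>R v \<noteq> 0" using f v by simp
        hence "norm v \<le> norm (f *\<^sub>R v)" using vmin fS by blast
        moreover have "norm (f *\<^sub>R v) < norm v" using f v by simp
        ultimately show False by simp
      qed
      define m where "m = \<lfloor>t\<rfloor>"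
      define c' where "c' i = (if i = 0 then m else c (i - 1))" for i
      have "s = of_int m *\<^sub>R v + (\<Sum>i<r. of_int (c i) *\<^sub>R lf i)"
        using wt tint by (simp add: w_def m_def algebra_simps)
      also have "\<dots> = (\<Sum>i<Suc r. of_int (c' i) *\<^sub>R bs!i)"
      proof -
        have "(\<Sum>i<Suc r. of_int (c' i) *\<^sub>R bs!i) = of_int (c' 0) *\<^sub>R bs!0 + (\<Sum>i<r. of_int (c' (Suc i)) *\<^sub>R bs!(Suc i))"
          by (rule sum.lessThan_Suc_shift)
        also have "(\<Sum>i<r. of_int (c' (Suc i)) *\<^sub>R bs!(Suc i)) = (\<Sum>i<r. of_int (c i) *\<^sub>R lf i)"
          by (intro sum.cong) (simp_all add: c'_def bsS)
        finally show ?thesis by (simp add: c'_def bs0)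
      qed
      finally show "s \<in> zspan bs" unfolding zspan_def using lbs by auto
    qed
  qed
  hence "lattice_basis S bs" using dind by (simp add: lattice_basis_iff)
  thus ?case using lbs bound by blast
qed



lemma covol_basis:
  fixes S :: "'a::euclidean_space set"
  assumes "lattice_basis S bs" shows "covol S = sqrt (gram_det bs)"
proof -
  have "lattice_basis S (SOME bs. lattice_basis S bs)" using assms by (rule someI)
  thus ?thesis unfolding covol_def using gram_det_basis_inv[OF assms] by simp
qed

lemma sublattice_minnorm:
  assumes "sublattice S L" "\<forall>x\<in>L. x \<noteq> 0 \<longrightarrow> e \<le> norm x"
  shows "add_subgroup S" "\<forall>x\<in>S. x \<noteq> 0 \<longrightarrow> e \<le> norm x"
  using assms by (auto simp: sublattice_def)

lemma slope_bdd:
  fixes L :: "'a::euclidean_space set"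
  assumes "euclidean_lattice L"
  shows "bdd_above {slope S | S. sublattice S L \<and> S \<noteq> {0}}"
proof -
  obtain e where e: "e > 0" "\<forall>x\<in>L. x \<noteq> 0 \<longrightarrow> e \<le> norm x" using lattice_minnorm[OF assms] by blast
  define B where "B = (\<Sum>r\<le>DIM('a). \<bar>ln (sqrt (hc r * e ^ (2 * r)))\<bar>)"
  have B0: "B \<ge> 0" unfolding B_def by (simp add: sum_nonneg)
  have "slope S \<le> B" if S: "sublattice S L" "S \<noteq> {0}" for S
  proof -
    note sm = sublattice_minnorm[OF S(1) e(2)]
    define r where "r = dim (span S)"
    obtain bs where bs: "lattice_basis S bs" "length bs = r" "gram_det bs \<ge> hc r * e ^ (2 * r)"
      using basis_exists[OF sm(1) e(1) sm(2) r_def[symmetric]] by blast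
    define m where "m = hc r * e ^ (2 * r)"
    have m0: "m > 0" using hc_pos e by (simp add: m_def)
    have cov: "covol S = sqrt (gram_det bs)" by (rule covol_basis[OF bs(1)])
    have "sqrt m \<le> covol S" using bs(3) cov by (simp add: m_def)
    moreover have sp: "sqrt m > 0" using m0 by simp
    ultimately have cp: "covol S > 0" by linarith
    have "ln (sqrt m) \<le> ln (covol S)" using \<open>sqrt m \<le> covol S\<close> sp cp by (simp add: ln_le_cancel_iff)
    hence d1: "deg S \<le> - ln (sqrt m)" by (simp add: deg_def)
    have rle: "r \<le> DIM('a)" unfolding r_def by (rule dim_subset_UNIV)
    have "\<bar>ln (sqrt m)\<bar> \<le> B" unfolding B_def m_def
      by (rule member_le_sum[of r "{..DIM('a)}" "\<lambda>r. \<bar>ln (sqrt (hc r * e ^ (2 * r)))\<bar>"]) (use rle in auto)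
    hence dB: "deg S \<le> B" using d1 by linarith
    show "slope S \<le> B"
    proof (cases "deg S \<le> 0")
      case True
      hence "slope S \<le> 0" unfolding slope_def by (simp add: divide_nonpos_nonneg)
      thus ?thesis using B0 by linarith
    next
      case False
      hence "slope S \<le> deg S" unfolding slope_def
        by (cases "real (rk S) = 0") (auto simp: divide_le_eq intro: order.trans[of _ "deg S * 1"] mult_left_mono)
      thus ?thesis using dB by linarith
    qed
  qed
  thus ?thesis unfolding bdd_above_def by blast
qed

lemma slope_le_mu:
  fixes L :: "'a::euclidean_space set"
  assumes "euclidean_lattice L" "sublattice S L" "S \<noteq> {0}"
  shows "slope S \<le> mu_max L"
  unfolding mu_max_def by (rule cSup_upper) (use assms slope_bdd[OF assms(1)] in auto)

lemma gram_ge1: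
  fixes L :: "'a::euclidean_space set"
  assumes L: "euclidean_lattice L" and mu: "mu_max L = 0"
    and d: "distinct bs" and ind: "independent (set bs)" and sub: "set bs \<subseteq> L" and n: "length bs > 0"
  shows "gram_det bs \<ge> 1"
proof -
  define S where "S = zspan bs"
  have sg: "add_subgroup L" using L by (simp add: euclidean_lattice_def)
  have lb: "lattice_basis S bs" using d ind by (simp add: lattice_basis_iff S_def)
  have subl: "sublattice S L" unfolding sublattice_def S_def using zspan_subset[OF sg sub] zspan_sg by blast
  have "bs!0 \<in> S" using in_zspan[OF n] by (simp add: S_def)
  moreover have "bs!0 \<noteq> 0"
  proof
    assume "bs!0 = 0" hence "0 \<in> set bs" using nth_mem[OF n] by simp
    thus False using dependent_zero ind by blast
  qed
  ultimately have S0: "S \<noteq> {0}" by blast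
  have sl: "slope S \<le> 0" using slope_le_mu[OF L subl S0] mu by simp
  have rk: "rk S = length bs" using length_basis[OF lb] by (simp add: rk_def)
  have gp: "gram_det bs > 0" using gram_det_pos_iff d ind by blast
  have cov: "covol S = sqrt (gram_det bs)" by (rule covol_basis[OF lb])
  have "- ln (sqrt (gram_det bs)) / real (length bs) \<le> 0" using sl by (simp add: slope_def deg_def rk cov)
  hence "0 \<le> ln (sqrt (gram_det bs)) / real (length bs)" by simp
  moreover have "real (length bs) > 0" using n by simp
  ultimately have "ln (sqrt (gram_det bs)) \<ge> 0" by (simp add: zero_le_divide_iff)
  hence "sqrt (gram_det bs) \<ge> 1" using gp by (simp add: ln_ge_zero_iff)
  thus ?thesis by simp
qed

lemma amgm1:
  fixes x :: "nat \<Rightarrow> real"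
  assumes fin: "finite I" and nn: "\<And>i. i \<in> I \<Longrightarrow> x i \<ge> 0" and p: "(\<Prod>i\<in>I. x i) \<ge> 1"
  shows "real (card I) \<le> (\<Sum>i\<in>I. x i)"
proof -
  have pos: "x i > 0" if "i \<in> I" for i
  proof (rule ccontr)
    assume "\<not> x i > 0" hence "x i = 0" using nn[OF that] by simp
    hence "(\<Prod>i\<in>I. x i) = 0" using fin that by (meson prod_zero_iff)
    thus False using p by simp
  qed
  have "0 \<le> ln (\<Prod>i\<in>I. x i)" using p by simp
  also have "\<dots> = (\<Sum>i\<in>I. ln (x i))" using fin pos by (intro ln_prod) force+
  also have "\<dots> \<le> (\<Sum>i\<in>I. x i - 1)" using pos by (intro sum_mono ln_le_minus_one) auto
  also have "\<dots> = (\<Sum>i\<in>I. x i) - real (card I)" by (simp add: sum_subtractf)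
  finally show ?thesis by simp
qed

section \<open>Tensors\<close>

lemma tensor_inner: "inner (tensor a b) (tensor c d) = inner a c * inner b d"
  unfolding tensor_def inner_vec_def
  apply (simp add: sum_product mult_ac)
  apply (rule sum.swap)
  done

lemma tensor_sum_left: "tensor (sum f I) b = (\<Sum>i\<in>I. tensor (f i) b)"
  unfolding tensor_def by (simp only: Finite_Cartesian_Product.vec_eq_iff) (simp add: sum_distrib_right)

lemma tensor_sum_right: "tensor a (sum f I) = (\<Sum>i\<in>I. tensor a (f i))"
  unfolding tensor_def by (simp only: Finite_Cartesian_Product.vec_eq_iff) (simp add: sum_distrib_left)

lemma tensor_scale_left: "tensor (r *\<^sub>R a) b = r *\<^sub>R tensor a b"
  unfolding tensor_def by (simp only: Finite_Cartesian_Product.vec_eq_iff) (simp add: mult_ac)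

lemma tensor_scale_right: "tensor a (r *\<^sub>R b) = r *\<^sub>R tensor a b"
  unfolding tensor_def by (simp only: Finite_Cartesian_Product.vec_eq_iff) (simp add: mult_ac)



lemma not_indep_dim_less:
  fixes bs :: "'a::euclidean_space list"
  assumes nd: "\<not> (distinct bs \<and> independent (set bs))"
  shows "dim (span (set bs)) < length bs"
proof -
  have a: "dim (set bs) \<le> card (set bs)" by (rule dim_le_card) (auto intro: span_base)
  have b: "card (set bs) \<le> length bs" by (rule card_length)
  show ?thesis
  proof (rule ccontr)
    assume "\<not> dim (span (set bs)) < length bs"
    hence e: "dim (set bs) = length bs" using a b by simp
    hence "card (set bs) = length bs" using a b by simp
    hence "distinct bs" by (rule card_distinct)
    moreover have "independent (set bs)"
      using card_eq_dim[of "set bs" "set bs"] e \<open>card (set bs) = length bs\<close> by (auto intro: span_base)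
    ultimately show False using nd by blast
  qed
qed

lemma reduce_left:
  fixes L :: "(real^'n) set" and M :: "(real^'m) set"
  assumes L: "euclidean_lattice L" and M: "euclidean_lattice M"
    and rep: "\<forall>k<l. u k \<in> L \<and> u' k \<in> M" and a: "\<alpha> = (\<Sum>k<l. tensor (u k) (u' k))"
    and nd: "\<not> (distinct (map u [0..<l]) \<and> independent (set (map u [0..<l])))"
  shows "\<exists>l'<l. \<exists>v v'. (\<forall>k<l'. v k \<in> L \<and> v' k \<in> M) \<and> \<alpha> = (\<Sum>k<l'. tensor (v k) (v' k))"
proof -
  define bs where "bs = map u [0..<l]"
  define N where "N = zspan bs"
  have sgL: "add_subgroup L" and sgM: "add_subgroup M" using L M by (auto simp: euclidean_lattice_def)
  obtain e where e: "e > 0" "\<forall>x\<in>L. x \<noteq> 0 \<longrightarrow> e \<le> norm x" using lattice_minnorm[OF L] by blast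
  have setL: "set bs \<subseteq> L" using rep by (auto simp: bs_def)
  have NL: "N \<subseteq> L" unfolding N_def by (rule zspan_subset[OF sgL setL])
  have sgN: "add_subgroup N" unfolding N_def by (rule zspan_sg)
  have mnN: "\<forall>x\<in>N. x \<noteq> 0 \<longrightarrow> e \<le> norm x" using e(2) NL by blast
  define r where "r = dim (span N)"
  have rl: "r < l"
    using not_indep_dim_less[of bs] nd by (simp add: r_def N_def span_zspan bs_def)
  obtain cs where cs: "lattice_basis N cs" "length cs = r"
    using basis_exists[OF sgN e(1) mnN r_def[symmetric]] by blast
  have Nz: "N = zspan cs" using cs(1) by (simp add: lattice_basis_iff)
  have "\<forall>k. \<exists>c. k < l \<longrightarrow> u k = (\<Sum>j<r. of_int (c j) *\<^sub>R cs!j)"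
  proof
    fix k show "\<exists>c. k < l \<longrightarrow> u k = (\<Sum>j<r. of_int (c j) *\<^sub>R cs!j)"
    proof (cases "k < l")
      case True
      hence "u k \<in> zspan cs" using in_zspan[of k bs] Nz by (simp add: N_def bs_def)
      thus ?thesis using cs(2) by (auto elim: zspan_coords)
    qed auto
  qed
  then obtain m where m: "\<And>k. k < l \<Longrightarrow> u k = (\<Sum>j<r. of_int (m k j) *\<^sub>R cs!j)" by metis
  define v' where "v' j = (\<Sum>k<l. of_int (m k j) *\<^sub>R u' k)" for j
  have "\<alpha> = (\<Sum>k<l. tensor (\<Sum>j<r. of_int (m k j) *\<^sub>R cs!j) (u' k))"
    unfolding a by (intro sum.cong) (simp_all add: m)
  also have "\<dots> = (\<Sum>k<l. \<Sum>j<r. of_int (m k j) *\<^sub>R tensor (cs!j) (u' k))"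
    by (simp add: tensor_sum_left tensor_scale_left)
  also have "\<dots> = (\<Sum>j<r. \<Sum>k<l. of_int (m k j) *\<^sub>R tensor (cs!j) (u' k))"
    by (rule sum.swap)
  also have "\<dots> = (\<Sum>j<r. tensor (cs!j) (v' j))"
    by (simp add: v'_def tensor_sum_right tensor_scale_right)
  finally have aeq: "\<alpha> = (\<Sum>j<r. tensor (cs!j) (v' j))" .
  have "\<forall>j<r. cs!j \<in> L \<and> v' j \<in> M"
  proof (intro allI impI conjI)
    fix j assume j: "j < r"
    show "cs!j \<in> L" using in_zspan[of j cs] j cs(2) Nz NL by auto
    show "v' j \<in> M" unfolding v'_def by (rule sg_sum[OF sgM]) (use rep sg_int[OF sgM] in auto)
  qed
  thus ?thesis using rl aeq by blast
qed

lemma reduce_right: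
  fixes L :: "(real^'n) set" and M :: "(real^'m) set"
  assumes L: "euclidean_lattice L" and M: "euclidean_lattice M"
    and rep: "\<forall>k<l. u k \<in> L \<and> u' k \<in> M" and a: "\<alpha> = (\<Sum>k<l. tensor (u k) (u' k))"
    and nd: "\<not> (distinct (map u' [0..<l]) \<and> independent (set (map u' [0..<l])))"
  shows "\<exists>l'<l. \<exists>v v'. (\<forall>k<l'. v k \<in> L \<and> v' k \<in> M) \<and> \<alpha> = (\<Sum>k<l'. tensor (v k) (v' k))"
proof -
  define bs where "bs = map u' [0..<l]"
  define N where "N = zspan bs"
  have sgL: "add_subgroup L" and sgM: "add_subgroup M" using L M by (auto simp: euclidean_lattice_def)
  obtain e where e: "e > 0" "\<forall>x\<in>M. x \<noteq> 0 \<longrightarrow> e \<le> norm x" using lattice_minnorm[OF M] by blast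
  have setM: "set bs \<subseteq> M" using rep by (auto simp: bs_def)
  have NM: "N \<subseteq> M" unfolding N_def by (rule zspan_subset[OF sgM setM])
  have sgN: "add_subgroup N" unfolding N_def by (rule zspan_sg)
  have mnN: "\<forall>x\<in>N. x \<noteq> 0 \<longrightarrow> e \<le> norm x" using e(2) NM by blast
  define r where "r = dim (span N)"
  have rl: "r < l"
    using not_indep_dim_less[of bs] nd by (simp add: r_def N_def span_zspan bs_def)
  obtain cs where cs: "lattice_basis N cs" "length cs = r"
    using basis_exists[OF sgN e(1) mnN r_def[symmetric]] by blast
  have Nz: "N = zspan cs" using cs(1) by (simp add: lattice_basis_iff)
  have "\<forall>k. \<exists>c. k < l \<longrightarrow> u' k = (\<Sum>j<r. of_int (c j) *\<^sub>R cs!j)"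
  proof
    fix k show "\<exists>c. k < l \<longrightarrow> u' k = (\<Sum>j<r. of_int (c j) *\<^sub>R cs!j)"
    proof (cases "k < l")
      case True
      hence "u' k \<in> zspan cs" using in_zspan[of k bs] Nz by (simp add: N_def bs_def)
      thus ?thesis using cs(2) by (auto elim: zspan_coords)
    qed auto
  qed
  then obtain m where m: "\<And>k. k < l \<Longrightarrow> u' k = (\<Sum>j<r. of_int (m k j) *\<^sub>R cs!j)" by metis
  define v where "v j = (\<Sum>k<l. of_int (m k j) *\<^sub>R u k)" for j
  have "\<alpha> = (\<Sum>k<l. tensor (u k) (\<Sum>j<r. of_int (m k j) *\<^sub>R cs!j))"
    unfolding a by (intro sum.cong) (simp_all add: m)
  also have "\<dots> = (\<Sum>k<l. \<Sum>j<r. of_int (m k j) *\<^sub>R tensor (u k) (cs!j))"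
    by (simp add: tensor_sum_right tensor_scale_right)
  also have "\<dots> = (\<Sum>j<r. \<Sum>k<l. of_int (m k j) *\<^sub>R tensor (u k) (cs!j))"
    by (rule sum.swap)
  also have "\<dots> = (\<Sum>j<r. tensor (v j) (cs!j))"
    by (simp add: v_def tensor_sum_left tensor_scale_left)
  finally have aeq: "\<alpha> = (\<Sum>j<r. tensor (v j) (cs!j))" .
  have "\<forall>j<r. v j \<in> L \<and> cs!j \<in> M"
  proof (intro allI impI conjI)
    fix j assume j: "j < r"
    show "cs!j \<in> M" using in_zspan[of j cs] j cs(2) Nz NM by auto
    show "v j \<in> L" unfolding v_def by (rule sg_sum[OF sgL]) (use rep sg_int[OF sgL] in auto)
  qed
  thus ?thesis using rl aeq by blast
qed

lemma tri_decomp: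
  fixes bs :: "'a::euclidean_space list"
  shows "\<exists>T. (\<forall>k<length bs. bs!k = (\<Sum>i<length bs. T k i *\<^sub>R gs bs i)) \<and> (\<forall>k. T k k = 1) \<and> (\<forall>k i. k < i \<longrightarrow> T k i = 0)"
proof -
  define n where "n = length bs"
  have "\<forall>k. \<exists>c. k < n \<longrightarrow> bs!k - gs bs k = (\<Sum>i\<in>{..<k}. c i *\<^sub>R gs bs i)"
  proof
    fix k show "\<exists>c. k < n \<longrightarrow> bs!k - gs bs k = (\<Sum>i\<in>{..<k}. c i *\<^sub>R gs bs i)"
    proof (cases "k < n")
      case True
      have "bs!k - gs bs k \<in> span (gs bs ` {..<k})" using gs1[of bs k] gs4[of k bs] True n_def by simp
      thus ?thesis using span_image_coeffs[of "{..<k}" "bs!k - gs bs k" "gs bs"] by auto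
    qed auto
  qed
  then obtain c where c: "\<And>k. k < n \<Longrightarrow> bs!k - gs bs k = (\<Sum>i\<in>{..<k}. c k i *\<^sub>R gs bs i)" by metis
  define T where "T k i = (if i = k then 1 else if i < k then c k i else 0)" for k i
  have "bs!k = (\<Sum>i<n. T k i *\<^sub>R gs bs i)" if k: "k < n" for k
  proof -
    have "(\<Sum>i<n. T k i *\<^sub>R gs bs i) = (\<Sum>i<n. (if i = k then gs bs i else 0) + (if i < k then c k i *\<^sub>R gs bs i else 0))"
      by (intro sum.cong) (auto simp: T_def)
    also have "\<dots> = (\<Sum>i<n. (if i = k then gs bs i else 0)) + (\<Sum>i<n. (if i < k then c k i *\<^sub>R gs bs i else 0))"
      by (rule sum.distrib)
    also have "(\<Sum>i<n. (if i = k then gs bs i else 0)) = gs bs k" using k by simp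
    also have "(\<Sum>i<n. (if i < k then c k i *\<^sub>R gs bs i else 0)) = (\<Sum>i\<in>{i\<in>{..<n}. i < k}. c k i *\<^sub>R gs bs i)"
      by (subst sum.inter_filter) auto
    also have "{i\<in>{..<n}. i < k} = {..<k}" using k by auto
    also have "gs bs k + (\<Sum>i\<in>{..<k}. c k i *\<^sub>R gs bs i) = bs!k" using c[OF k] by (metis add.commute diff_add_cancel)
    finally show ?thesis by simp
  qed
  moreover have "\<forall>k. T k k = 1" "\<forall>k i. k < i \<longrightarrow> T k i = 0" by (auto simp: T_def)
  ultimately show ?thesis unfolding n_def by blast
qed



lemma final_ineq:
  fixes bs :: "(real^'n) list" and bs' :: "(real^'m) list"
  assumes len: "length bs = l" "length bs' = l" and g1: "gram_det bs \<ge> 1" and g2: "gram_det bs' \<ge> 1"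
  shows "sqrt (real l) \<le> norm (\<Sum>k<l. tensor (bs!k) (bs'!k))"
proof -
  obtain T where T: "\<And>k. k < l \<Longrightarrow> bs!k = (\<Sum>i<l. T k i *\<^sub>R gs bs i)" "\<And>k. T k k = 1" "\<And>k i. k < i \<Longrightarrow> T k i = 0"
    using tri_decomp[of bs] len(1) by blast
  define g where "g = gs bs"
  define w where "w i = (\<Sum>k<l. T k i *\<^sub>R bs'!k)" for i
  define Tm where "Tm = Matrix.mat l l (\<lambda>(k,i). T k i)"
  have Tmc: "Tm \<in> carrier_mat l l" by (simp add: Tm_def)
  have detTm: "Determinant.det Tm = 1"
    by (subst det_lower_triangular[OF _ Tmc]) (auto simp: Tm_def prod_list_diag_prod T(2,3))
  have TTc: "transpose_mat Tm \<in> carrier_mat l l" using Tmc by simp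
  have detTT: "Determinant.det (transpose_mat Tm) = 1" using det_transpose[OF Tmc] detTm by simp
  have ltw: "lt (transpose_mat Tm) bs' = map w [0..<l]"
  proof (rule nth_equalityI)
    show "length (lt (transpose_mat Tm) bs') = length (map w [0..<l])" using TTc by simp
    fix i assume "i < length (lt (transpose_mat Tm) bs')"
    hence i: "i < l" using TTc by simp
    have "lt (transpose_mat Tm) bs' ! i = (\<Sum>k<l. transpose_mat Tm $$ (i,k) *\<^sub>R bs'!k)"
      using i TTc len(2) by (simp add: nth_lt)
    also have "\<dots> = w i" unfolding w_def using i by (intro sum.cong) (simp_all add: Tm_def)
    finally show "lt (transpose_mat Tm) bs' ! i = map w [0..<l] ! i" using i by simp
  qed
  have gw: "gram_det (map w [0..<l]) = gram_det bs'"
    using gram_det_lt[OF TTc len(2)] detTT ltw by simp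
  have aeq: "(\<Sum>k<l. tensor (bs!k) (bs'!k)) = (\<Sum>i<l. tensor (g i) (w i))"
  proof -
    have "(\<Sum>k<l. tensor (bs!k) (bs'!k)) = (\<Sum>k<l. tensor (\<Sum>i<l. T k i *\<^sub>R g i) (bs'!k))"
      by (intro sum.cong) (simp_all add: T(1) g_def)
    also have "\<dots> = (\<Sum>k<l. \<Sum>i<l. T k i *\<^sub>R tensor (g i) (bs'!k))"
      by (simp add: tensor_sum_left tensor_scale_left)
    also have "\<dots> = (\<Sum>i<l. \<Sum>k<l. T k i *\<^sub>R tensor (g i) (bs'!k))" by (rule sum.swap)
    also have "\<dots> = (\<Sum>i<l. tensor (g i) (w i))" by (simp add: w_def tensor_sum_right tensor_scale_right)
    finally show ?thesis .
  qed
  have gorth: "inner (g i) (g j) = (if i = j then (norm (g i))^2 else 0)" if "i < l" "j < l" for i j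
  proof (cases "i = j")
    case True thus ?thesis by (simp add: power2_norm_eq_inner)
  next
    case False
    show ?thesis
    proof (cases "i < j")
      case True
      have "inner (gs bs j) (gs bs i) = 0" by (rule gs5) (use True that len(1) in auto)
      thus ?thesis using False by (simp add: g_def inner_commute)
    next
      case ij: False
      hence "j < i" using False by simp
      have "inner (gs bs i) (gs bs j) = 0" by (rule gs5) (use \<open>j < i\<close> that len(1) in auto)
      thus ?thesis using False by (simp add: g_def)
    qed
  qed
  have "(norm (\<Sum>i<l. tensor (g i) (w i)))^2 = inner (\<Sum>i<l. tensor (g i) (w i)) (\<Sum>j<l. tensor (g j) (w j))"
    by (simp add: power2_norm_eq_inner)
  also have "\<dots> = (\<Sum>i<l. inner (tensor (g i) (w i)) (\<Sum>j<l. tensor (g j) (w j)))"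
    by (rule inner_sum_left)
  also have "\<dots> = (\<Sum>i<l. \<Sum>j<l. inner (tensor (g i) (w i)) (tensor (g j) (w j)))"
    by (intro sum.cong refl) (rule inner_sum_right)
  also have "\<dots> = (\<Sum>i<l. \<Sum>j<l. inner (g i) (g j) * inner (w i) (w j))"
    by (simp only: tensor_inner)
  also have "\<dots> = (\<Sum>i<l. \<Sum>j<l. if j = i then (norm (g i))^2 * inner (w i) (w i) else 0)"
    by (intro sum.cong refl) (auto simp: gorth)
  also have "\<dots> = (\<Sum>i<l. (norm (g i))^2 * (norm (w i))^2)"
    by (simp add: power2_norm_eq_inner)
  finally have n2: "(norm (\<Sum>k<l. tensor (bs!k) (bs'!k)))^2 = (\<Sum>i<l. (norm (g i))^2 * (norm (w i))^2)"
    using aeq by simp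
  have "(\<Prod>i<l. (norm (g i))^2 * (norm (w i))^2) = (\<Prod>i<l. (norm (g i))^2) * (\<Prod>i<l. (norm (w i))^2)"
    by (rule prod.distrib)
  also have "(\<Prod>i<l. (norm (g i))^2) = gram_det bs" using gram_det_gs[of bs] len(1) by (simp add: g_def)
  finally have pe: "(\<Prod>i<l. (norm (g i))^2 * (norm (w i))^2) = gram_det bs * (\<Prod>i<l. (norm (w i))^2)" .
  have "gram_det bs' \<le> (\<Prod>i<l. (norm (w i))^2)"
    using hadamard[of "map w [0..<l]"] gw by simp
  hence "1 \<le> (\<Prod>i<l. (norm (w i))^2)" using g2 by linarith
  moreover have "(\<Prod>i<l. (norm (w i))^2) \<ge> 0" by (simp add: prod_nonneg)
  ultimately have "1 * 1 \<le> gram_det bs * (\<Prod>i<l. (norm (w i))^2)"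
    using g1 by (intro mult_mono) auto
  hence pg: "1 \<le> (\<Prod>i<l. (norm (g i))^2 * (norm (w i))^2)" using pe by simp
  have "real (card {..<l}) \<le> (\<Sum>i<l. (norm (g i))^2 * (norm (w i))^2)"
    by (rule amgm1[OF _ _ pg]) simp_all
  hence "real l \<le> (norm (\<Sum>k<l. tensor (bs!k) (bs'!k)))^2" using n2 by simp
  hence "sqrt (real l) \<le> sqrt ((norm (\<Sum>k<l. tensor (bs!k) (bs'!k)))^2)" by (rule real_sqrt_le_mono)
  thus ?thesis by simp
qed

theorem proposition1:
  fixes L :: "(real^'n) set" and M :: "(real^'m) set" and \<alpha> :: "real^'m^'n"
  assumes "euclidean_lattice L" and "euclidean_lattice M"
    and "mu_max L = 0" and "mu_max M = 0"
    and "\<alpha> \<in> lattice_tensor L M"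
  shows "norm \<alpha> \<ge> sqrt (real (tensor_length L M \<alpha>))"
proof -
  let ?P = "\<lambda>l::nat. \<exists>u u'. (\<forall>k<l. u k \<in> L \<and> u' k \<in> M) \<and> \<alpha> = (\<Sum>k<l. tensor (u k) (u' k))"
  have "\<exists>l0. ?P l0"
  proof -
    have "\<exists>(l0::nat) u u'. \<alpha> = (\<Sum>k<l0. tensor (u k) (u' k)) \<and> (\<forall>k<l0. u k \<in> L \<and> u' k \<in> M)"
      using assms(5) unfolding lattice_tensor_def mem_Collect_eq .
    thus ?thesis by blast
  qed
  then obtain l0 where P0: "?P l0" by blast
  define l where "l = tensor_length L M \<alpha>"
  have ldef: "l = (LEAST l. ?P l)" unfolding l_def tensor_length_def by simp
  have "?P l" unfolding ldef by (rule LeastI[of ?P l0]) (rule P0)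
  then obtain u u' where rep: "\<forall>k<l. u k \<in> L \<and> u' k \<in> M" and a: "\<alpha> = (\<Sum>k<l. tensor (u k) (u' k))" by blast
  have minl: "\<not> ?P l'" if "l' < l" for l' using not_less_Least[of l' ?P] that ldef by simp
  have indl: "distinct (map u [0..<l]) \<and> independent (set (map u [0..<l]))"
  proof (rule ccontr)
    assume "\<not> ?thesis"
    from reduce_left[OF assms(1,2) rep a this] obtain l' v v' where
      l': "l' < l" "\<forall>k<l'. v k \<in> L \<and> v' k \<in> M" "\<alpha> = (\<Sum>k<l'. tensor (v k) (v' k))" by blast
    have "?P l'" using l'(2,3) by blast
    thus False using minl[OF l'(1)] by contradiction
  qed
  have indr: "distinct (map u' [0..<l]) \<and> independent (set (map u' [0..<l]))"
  proof (rule ccontr)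
    assume "\<not> ?thesis"
    from reduce_right[OF assms(1,2) rep a this] obtain l' v v' where
      l': "l' < l" "\<forall>k<l'. v k \<in> L \<and> v' k \<in> M" "\<alpha> = (\<Sum>k<l'. tensor (v k) (v' k))" by blast
    have "?P l'" using l'(2,3) by blast
    thus False using minl[OF l'(1)] by contradiction
  qed
  show ?thesis
  proof (cases "l = 0")
    case True thus ?thesis using l_def by simp
  next
    case False
    have g1: "gram_det (map u [0..<l]) \<ge> 1"
      by (rule gram_ge1[OF assms(1,3)]) (use indl rep False in auto)
    have g2: "gram_det (map u' [0..<l]) \<ge> 1"
      by (rule gram_ge1[OF assms(2,4)]) (use indr rep False in auto)
    have "sqrt (real l) \<le> norm (\<Sum>k<l. tensor (map u [0..<l] ! k) (map u' [0..<l] ! k))"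
      by (rule final_ineq[OF _ _ g1 g2]) simp_all
    also have "(\<Sum>k<l. tensor (map u [0..<l] ! k) (map u' [0..<l] ! k)) = \<alpha>"
      unfolding a by (intro sum.cong) simp_all
    finally show ?thesis using l_def by simp
  qed
qed


end
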